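(* Consider the quadratic infinite-horizon dynamic multi-agent system described in the context. Suppose $(\mathbf A,\mathbf B)$ is controllable and there is $C>0$ with $C(t)\ge C$ for all $t\ge0$. Let $\mathbf P$ be the symmetric positive definite (stabilizing) solution of the discrete algebraic Riccati equation $\mathbf P=\mathbf A^\top\mathbf P\mathbf A+\mathbf Q-\mathbf A^\top\mathbf P\mathbf B(\mathbf B^\top\mathbf P\mathbf B+\mathbf R)^{-1}\mathbf B^\top\mathbf P\mathbf A$, let $\mathbf K=-(\mathbf R+\mathbf B^\top\mathbf P\mathbf B)^{-1}\mathbf B^\top\mathbf P\mathbf A$, assume $\mathbf K^\top\mathbf H\mathbf K\neq0$, and set $$\mathbb X_0=\Big\{\mathbf x(0)\in\mathbb R^{nd}:\ \|\mathbf x(0)\|^2\le\frac{C\,\sigma_{\min}(\mathbf P)}{\sigma_{\max}(\mathbf P)\,\sigma_{\max}(\mathbf K^\top\mathbf H\mathbf K)}\Big\}.$$ If $\mathbf x(0)\in\mathbb X_0$, then: (i) the infinite-horizon social welfare maximization problem is feasible and its optimal control input is given by the linear feedback $\mathbf u^\ast(t)=\mathbf K\mathbf x(t)$ for all $t\ge0$; (ii) there is an infinite-horizon competitive equilibrium whose price sequence is $\lambda^\ast_t=0$ for all $t\ge0$ (with control inputs given by this feedback).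
   Context: Quadratic infinite-horizon dynamic multi-agent system: $n$ agents $\mathcal V=\{1,\dots,n\}$, times $t=0,1,2,\dots$; agent $i$ has state $\mathbf x_i(t)\in\mathbb R^d$, input $\mathbf u_i(t)\in\mathbb R^m$, dynamics $\mathbf x_i(t+1)=\mathbf A_i\mathbf x_i(t)+\mathbf B_i\mathbf u_i(t)$, utility $f_i(\mathbf x,\mathbf u)=-\mathbf x^\top\mathbf Q_i\mathbf x-\mathbf u^\top\mathbf R_i\mathbf u$ and consumption $h_i(\mathbf u)=\mathbf u^\top\mathbf H_i\mathbf u$ with $\mathbf Q_i,\mathbf R_i,\mathbf H_i$ symmetric positive definite; excess resources $a_i(t)\in\mathbb R$, $C(t)=\sum_ia_i(t)$; traded resources $e_i(t)\in\mathbb R$. Stacked quantities: $\mathbf x(t)=(\mathbf x_1(t),\dots,\mathbf x_n(t))$, $\mathbf u(t)=(\mathbf u_1(t),\dots,\mathbf u_n(t))$, $\mathbf A=\mathrm{blockdiag}(\mathbf A_i)$, $\mathbf B=\mathrm{blockdiag}(\mathbf B_i)$, $\mathbf Q=\mathrm{blockdiag}(\mathbf Q_i)$, $\mathbf R=\mathrm{blockdiag}(\mathbf R_i)$, $\mathbf H=\mathrm{blockdiag}(\mathbf H_i)$. $\sigma_{\min},\sigma_{\max}$ denote smallest and largest eigenvalues of a symmetric matrix. An infinite-horizon competitive equilibrium for $\mathbf x(0)$ is a triple $(\boldsymbol\lambda^\ast,\mathbf U^\ast,\mathbf E^\ast)$, $\boldsymbol\lambda^\ast=(\lambda^\ast_t)_{t\ge0}$,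 such that (i) for each $i$, $((\mathbf u_i^\ast(t))_t,(e_i^\ast(t))_t)$ attains a finite maximum of $\sum_{t=0}^\infty[f_i(\mathbf x_i(t),\mathbf u_i(t))+\lambda^\ast_te_i(t)]$ subject to the dynamics and $e_i(t)\le a_i(t)-h_i(\mathbf u_i(t))$ for all $t$; (ii) $\sum_{i=1}^ne_i^\ast(t)=0$ for all $t$. The infinite-horizon social welfare maximization problem for $\mathbf x(0)$: maximize $\sum_{i=1}^n\sum_{t=0}^\infty f_i(\mathbf x_i(t),\mathbf u_i(t))$ over all inputs and trades subject to the dynamics, $e_i(t)\le a_i(t)-h_i(\mathbf u_i(t))$ and $\sum_{i=1}^ne_i(t)=0$ for all $t\ge0$; it is feasible if it has an admissible point and a finite optimal value. *)

theory Defs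
  imports "HOL-Analysis.Analysis" "HOL-Library.Liminf_Limsup"
begin

text \<open>Agents are indexed by the finite type 'i (n = CARD('i)), agent states by
 the finite type 'd (d = CARD('d)), agent inputs by the finite type 'c (m = CARD('c)).
 Stacked vectors live in real^('i \<times> 'd) resp. real^('i \<times> 'c).\<close>

definition blockdiag :: "('i::finite \<Rightarrow> real^'b::finite^'a::finite) \<Rightarrow> real^('i \<times> 'b)^('i \<times> 'a)" where
  "blockdiag M = (\<chi> p q. if fst p = fst q then M (fst p) $ snd p $ snd q else 0)"

definition comp :: "real^('i::finite \<times> 'k::finite) \<Rightarrow> 'i \<Rightarrow> real^'k" where
  "comp v i = (\<chi> k. v $ (i,k))"

fun mpow :: "real^'n::finite^'n \<Rightarrow> nat \<Rightarrow> real^'n^'n" where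
  "mpow A 0 = mat 1"
| "mpow A (Suc k) = A ** mpow A k"

fun traj :: "real^'n::finite^'n \<Rightarrow> real^'m::finite^'n \<Rightarrow> real^'n \<Rightarrow> (nat \<Rightarrow> real^'m) \<Rightarrow> nat \<Rightarrow> real^'n" where
  "traj A B x0 u 0 = x0"
| "traj A B x0 u (Suc t) = A *v traj A B x0 u t + B *v u t"

text \<open>(A,B) controllable: the Kalman matrix [B, AB, ..., A^(N-1) B] has rank N,
 i.e. its columns span R^N (N = CARD('n)).\<close>
definition controllable :: "real^'n::finite^'n \<Rightarrow> real^'m::finite^'n \<Rightarrow> bool" where
  "controllable A B \<longleftrightarrow> span (\<Union>k<CARD('n). columns (mpow A k ** B)) = UNIV"

definition sym_pos_def :: "real^'n::finite^'n \<Rightarrow> bool" where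
  "sym_pos_def M \<longleftrightarrow> transpose M = M \<and> (\<forall>v. v \<noteq> 0 \<longrightarrow> 0 < v \<bullet> (M *v v))"

definition eigenvalues :: "real^'n::finite^'n \<Rightarrow> real set" where
  "eigenvalues M = {lam. \<exists>v. v \<noteq> 0 \<and> M *v v = lam *\<^sub>R v}"

definition sigma_min :: "real^'n::finite^'n \<Rightarrow> real" where
  "sigma_min M = Min (eigenvalues M)"

definition sigma_max :: "real^'n::finite^'n \<Rightarrow> real" where
  "sigma_max M = Max (eigenvalues M)"

definition util :: "real^'d::finite^'d \<Rightarrow> real^'c::finite^'c \<Rightarrow> real^'d \<Rightarrow> real^'c \<Rightarrow> real" where
  "util Q R x u = - (x \<bullet> (Q *v x)) - (u \<bullet> (R *v u))"

definition cons :: "real^'c::finite^'c \<Rightarrow> real^'c \<Rightarrow> real" where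
  "cons H u = u \<bullet> (H *v u)"

text \<open>Extended-real value of an infinite series (limsup of partial sums); equals the
 usual sum for summable series, +/- infinity for series diverging to +/- infinity.\<close>
definition series_val :: "(nat \<Rightarrow> real) \<Rightarrow> ereal" where
  "series_val g = limsup (\<lambda>N. ereal (\<Sum>t<N. g t))"

definition swm_admissible ::
  "('i::finite \<Rightarrow> real^'c::finite^'c) \<Rightarrow> ('i \<Rightarrow> nat \<Rightarrow> real)
   \<Rightarrow> (nat \<Rightarrow> real^('i \<times> 'c)) \<Rightarrow> ('i \<Rightarrow> nat \<Rightarrow> real) \<Rightarrow> bool" where
  "swm_admissible Hi a u e \<longleftrightarrow>
     (\<forall>t. (\<forall>i. e i t \<le> a i t - cons (Hi i) (comp (u t) i)) \<and> (\<Sum>i\<in>UNIV. e i t) = 0)"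

definition swm_stage ::
  "('i::finite \<Rightarrow> real^'d::finite^'d) \<Rightarrow> ('i \<Rightarrow> real^'c::finite^'d)
   \<Rightarrow> ('i \<Rightarrow> real^'d^'d) \<Rightarrow> ('i \<Rightarrow> real^'c^'c)
   \<Rightarrow> real^('i \<times> 'd) \<Rightarrow> (nat \<Rightarrow> real^('i \<times> 'c)) \<Rightarrow> nat \<Rightarrow> real" where
  "swm_stage Ai Bi Qi Ri x0 u t =
     (\<Sum>i\<in>UNIV. util (Qi i) (Ri i)
        (comp (traj (blockdiag Ai) (blockdiag Bi) x0 u t) i) (comp (u t) i))"

definition swm_value where
  "swm_value Ai Bi Qi Ri Hi a x0 =
     (SUP ue \<in> {(u,e). swm_admissible Hi a u e}. series_val (swm_stage Ai Bi Qi Ri x0 (fst ue)))"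

definition swm_feasible where
  "swm_feasible Ai Bi Qi Ri Hi a x0 \<longleftrightarrow>
     (\<exists>u e. swm_admissible Hi a u e) \<and> \<bar>swm_value Ai Bi Qi Ri Hi a x0\<bar> \<noteq> \<infinity>"

definition swm_optimal_input where
  "swm_optimal_input Ai Bi Qi Ri Hi a x0 u \<longleftrightarrow>
     (\<exists>e. swm_admissible Hi a u e \<and> summable (swm_stage Ai Bi Qi Ri x0 u) \<and>
        (\<forall>u' e'. swm_admissible Hi a u' e' \<longrightarrow>
           series_val (swm_stage Ai Bi Qi Ri x0 u') \<le> ereal (suminf (swm_stage Ai Bi Qi Ri x0 u))))"

definition agent_feasible :: "real^'c::finite^'c \<Rightarrow> (nat \<Rightarrow> real) \<Rightarrow> (nat \<Rightarrow> real^'c) \<Rightarrow> (nat \<Rightarrow> real) \<Rightarrow> bool" where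
  "agent_feasible H ai ui ei \<longleftrightarrow> (\<forall>t. ei t \<le> ai t - cons H (ui t))"

definition agent_stage ::
  "real^'d::finite^'d \<Rightarrow> real^'c::finite^'d \<Rightarrow> real^'d^'d \<Rightarrow> real^'c^'c
   \<Rightarrow> real^'d \<Rightarrow> (nat \<Rightarrow> real) \<Rightarrow> (nat \<Rightarrow> real^'c) \<Rightarrow> (nat \<Rightarrow> real) \<Rightarrow> nat \<Rightarrow> real" where
  "agent_stage A B Q R xi0 lam ui ei t = util Q R (traj A B xi0 ui t) (ui t) + lam t * ei t"

definition agent_optimal where
  "agent_optimal A B Q R H ai xi0 lam ui ei \<longleftrightarrow>
     agent_feasible H ai ui ei \<and> summable (agent_stage A B Q R xi0 lam ui ei) \<and>
     (\<forall>u e. agent_feasible H ai u e \<longrightarrow>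
        series_val (agent_stage A B Q R xi0 lam u e) \<le> ereal (suminf (agent_stage A B Q R xi0 lam ui ei)))"

definition competitive_equilibrium ::
  "('i::finite \<Rightarrow> real^'d::finite^'d) \<Rightarrow> ('i \<Rightarrow> real^'c::finite^'d)
   \<Rightarrow> ('i \<Rightarrow> real^'d^'d) \<Rightarrow> ('i \<Rightarrow> real^'c^'c) \<Rightarrow> ('i \<Rightarrow> real^'c^'c)
   \<Rightarrow> ('i \<Rightarrow> nat \<Rightarrow> real) \<Rightarrow> real^('i \<times> 'd)
   \<Rightarrow> (nat \<Rightarrow> real) \<Rightarrow> ('i \<Rightarrow> nat \<Rightarrow> real^'c) \<Rightarrow> ('i \<Rightarrow> nat \<Rightarrow> real) \<Rightarrow> bool" where
  "competitive_equilibrium Ai Bi Qi Ri Hi a x0 lam U E \<longleftrightarrow>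
     (\<forall>i. agent_optimal (Ai i) (Bi i) (Qi i) (Ri i) (Hi i) (a i) (comp x0 i) lam (U i) (E i)) \<and>
     (\<forall>t. (\<Sum>i\<in>UNIV. E i t) = 0)"

end

theory Submission
  imports Defs
begin


lemma transpose_add': "transpose (A + B) = transpose A + transpose (B::real^'n::finite^'m::finite)"
  by (simp add: transpose_def vec_eq_iff)
lemma transpose_diff': "transpose (A - B) = transpose A - transpose (B::real^'n::finite^'m::finite)"
  by (simp add: transpose_def vec_eq_iff)
lemma transpose_neg': "transpose (- A) = - transpose (A::real^'n::finite^'m::finite)"
  by (simp add: transpose_def vec_eq_iff)
lemma transpose_mat1: "transpose (mat 1 :: real^'n::finite^'n) = mat 1"
  by (simp add: transpose_def vec_eq_iff mat_def)

lemma neg_mv: "(- A) *v x = - (A *v x)" for A :: "real^'n::finite^'m::finite"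
  by (simp add: matrix_vector_mult_def vec_eq_iff sum_negf)

lemma sym_inner:
  fixes S :: "real^'n::finite^'n"
  assumes "transpose S = S"
  shows "(S *v x) \<bullet> y = x \<bullet> (S *v y)"
proof -
  have "x \<bullet> (S *v y) = (x v* S) \<bullet> y" by (simp only: dot_lmul_matrix)
  also have "\<dots> = (transpose S *v x) \<bullet> y" by (simp only: transpose_matrix_vector)
  finally show ?thesis using assms by simp
qed

lemma quad_cont: "continuous_on X (\<lambda>x::real^'n::finite. x \<bullet> (A *v x))"
  by (intro continuous_intros continuous_on_id linear_continuous_on
      matrix_vector_mul_bounded_linear)

lemma quad_expand:
  fixes T :: "real^'n::finite^'n"
  shows "(v + t *\<^sub>R w) \<bullet> (T *v (v + t *\<^sub>R w)) =
     v \<bullet> (T *v v) + t * (w \<bullet> (T *v v)) + t * (v \<bullet> (T *v w)) + t^2 * (w \<bullet> (T *v w))"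
  by (simp add: matrix_vector_right_distrib matrix_vector_mult_scaleR inner_add_left
      inner_add_right power2_eq_square algebra_simps)

lemma psd_null:
  fixes T :: "real^'n::finite^'n"
  assumes sym: "transpose T = T" and psd: "\<And>x. 0 \<le> x \<bullet> (T *v x)" and v0: "v \<bullet> (T *v v) = 0"
  shows "T *v v = 0"
proof (rule ccontr)
  assume ne: "T *v v \<noteq> 0"
  define w where "w = T *v v"
  define q where "q = w \<bullet> (T *v w)"
  have q0: "q \<ge> 0" using psd q_def by auto
  have ww: "w \<bullet> w > 0" using ne w_def by auto
  have vw: "v \<bullet> (T *v w) = w \<bullet> w" using sym_inner[OF sym, of v w] w_def by (simp add: inner_commute)
  define s where "s = (w \<bullet> w) / (q + 1)"
  have s0: "s > 0" using ww q0 s_def by auto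
  have "0 \<le> (v + (-s) *\<^sub>R w) \<bullet> (T *v (v + (-s) *\<^sub>R w))" using psd by blast
  also have "\<dots> = - 2 * s * (w \<bullet> w) + s^2 * q"
    unfolding quad_expand using v0 vw q_def w_def by (simp add: power2_eq_square)
  finally have "2 * s * (w \<bullet> w) \<le> s * (s * q)" by (simp add: power2_eq_square)
  hence "2 * (w \<bullet> w) \<le> s * q" using s0 by simp
  also have "s * q < w \<bullet> w" unfolding s_def using ww q0
    by (simp add: field_simps)
  finally show False using ww by simp
qed

lemma max_eig_exists:
  fixes S :: "real^'n::finite^'n"
  assumes sym: "transpose S = S"
  shows "\<exists>m\<in>eigenvalues S. \<forall>x. x \<bullet> (S *v x) \<le> m * (norm x)^2"
proof -
  have ne: "sphere (0::real^'n) 1 \<noteq> {}"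
  proof -
    obtain b :: "real^'n" where "b \<in> Basis" using nonempty_Basis by blast
    then show ?thesis by (auto intro!: exI[of _ b])
  qed
  obtain v where v: "v \<in> sphere 0 1" and vmax: "\<And>y. y \<in> sphere 0 1 \<Longrightarrow> y \<bullet> (S *v y) \<le> v \<bullet> (S *v v)"
    using continuous_attains_sup[OF compact_sphere ne quad_cont] by blast
  define m where "m = v \<bullet> (S *v v)"
  have bound: "x \<bullet> (S *v x) \<le> m * (norm x)^2" for x
  proof (cases "x = 0")
    case True then show ?thesis by simp
  next
    case False
    define y where "y = (1 / norm x) *\<^sub>R x"
    have "y \<in> sphere 0 1" using False y_def by auto
    hence "y \<bullet> (S *v y) \<le> m" using vmax m_def by blast
    moreover have "y \<bullet> (S *v y) = (x \<bullet> (S *v x)) / (norm x)^2"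
      using False by (simp add: y_def matrix_vector_mult_scaleR power2_eq_square)
    ultimately show ?thesis using False by (simp add: field_simps)
  qed
  define T where "T = m *\<^sub>R mat 1 - S"
  have Tv: "T *v x = m *\<^sub>R x - S *v x" for x
    by (simp add: T_def matrix_vector_mult_diff_rdistrib flip: scaleR_matrix_vector_assoc)
  have symT: "transpose T = T" using sym by (simp add: T_def transpose_diff' transpose_mat1 transpose_scalar)
  have psd: "0 \<le> x \<bullet> (T *v x)" for x
    using bound[of x] by (simp add: Tv inner_diff_right dot_square_norm)
  have nv: "norm v = 1" using v by simp
  have "v \<bullet> (T *v v) = 0" using nv by (simp add: Tv inner_diff_right dot_square_norm m_def)
  hence "T *v v = 0" using psd_null[OF symT psd] by blast
  hence "S *v v = m *\<^sub>R v" using Tv by simp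
  moreover have "v \<noteq> 0" using nv by auto
  ultimately have "m \<in> eigenvalues S" unfolding eigenvalues_def by blast
  then show ?thesis using bound by blast
qed

lemma eig_le:
  fixes S :: "real^'n::finite^'n"
  assumes "\<forall>x. x \<bullet> (S *v x) \<le> m * (norm x)^2" "l \<in> eigenvalues S"
  shows "l \<le> m"
proof -
  obtain v where v: "v \<noteq> 0" "S *v v = l *\<^sub>R v" using assms(2) unfolding eigenvalues_def by blast
  have "l * (norm v)^2 \<le> m * (norm v)^2" using assms(1)[rule_format, of v] v
    by (simp add: dot_square_norm)
  thus ?thesis using v by simp
qed

lemma eig_finite:
  fixes S :: "real^'n::finite^'n"
  assumes sym: "transpose S = S"
  shows "finite (eigenvalues S)"
proof -
  define E where "E = eigenvalues S"
  define g where "g l = (SOME v. v \<noteq> 0 \<and> S *v v = l *\<^sub>R v)" for l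
  have g: "g l \<noteq> 0 \<and> S *v g l = l *\<^sub>R g l" if "l \<in> E" for l
  proof -
    have "\<exists>v. v \<noteq> 0 \<and> S *v v = l *\<^sub>R v" using that unfolding E_def eigenvalues_def by auto
    then show ?thesis unfolding g_def by (rule someI_ex)
  qed
  have inj: "inj_on g E"
  proof (rule inj_onI)
    fix l k
    assume l: "l \<in> E" and k: "k \<in> E" and eq: "g l = g k"
    have "l *\<^sub>R g l = S *v g l" using g[OF l] by simp
    also have "\<dots> = S *v g k" using eq by simp
    also have "\<dots> = k *\<^sub>R g k" using g[OF k] by simp
    also have "\<dots> = k *\<^sub>R g l" using eq by simp
    finally show "l = k" using g[OF l] by simp
  qed
  have orth: "pairwise orthogonal (g ` E)"
  proof (clarsimp simp: pairwise_def)
    fix l k assume l: "l \<in> E" and k: "k \<in> E" and ne: "g l \<noteq> g k"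
    then have lk: "l \<noteq> k" by auto
    have "l * (g l \<bullet> g k) = (S *v g l) \<bullet> g k" using g[OF l] by simp
    also have "\<dots> = g l \<bullet> (S *v g k)" by (rule sym_inner[OF sym])
    also have "\<dots> = k * (g l \<bullet> g k)" using g[OF k] by simp
    finally show "orthogonal (g l) (g k)" using lk by (simp add: orthogonal_def)
  qed
  have "0 \<notin> g ` E" using g by auto
  then have "independent (g ` E)" by (rule pairwise_orthogonal_independent[OF orth])
  then have "finite (g ` E)" by (rule independent_imp_finite)
  then have "finite E" by (rule finite_imageD[OF _ inj])
  then show ?thesis unfolding E_def .
qed

lemma spectral:
  fixes S :: "real^'n::finite^'n"
  assumes sym: "transpose S = S"
  shows "sigma_max S \<in> eigenvalues S" "sigma_min S \<in> eigenvalues S"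
    "x \<bullet> (S *v x) \<le> sigma_max S * (norm x)^2" "sigma_min S * (norm x)^2 \<le> x \<bullet> (S *v x)"
proof -
  have fin: "finite (eigenvalues S)" by (rule eig_finite[OF sym])
  obtain m where m: "m \<in> eigenvalues S" "\<forall>x. x \<bullet> (S *v x) \<le> m * (norm x)^2"
    using max_eig_exists[OF sym] by blast
  have smax: "sigma_max S = m" unfolding sigma_max_def
  proof (rule Max_eqI[OF fin])
    fix l assume "l \<in> eigenvalues S" then show "l \<le> m" by (rule eig_le[OF m(2)])
  next
    show "m \<in> eigenvalues S" by (rule m(1))
  qed
  show "sigma_max S \<in> eigenvalues S" unfolding smax by (rule m(1))
  show "x \<bullet> (S *v x) \<le> sigma_max S * (norm x)^2" unfolding smax using m(2) by blast
  have symn: "transpose (-S) = -S" using sym by (simp only: transpose_neg')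
  obtain m' where m': "m' \<in> eigenvalues (-S)" "\<forall>x. x \<bullet> ((-S) *v x) \<le> m' * (norm x)^2"
    using max_eig_exists[OF symn] by blast
  have mm: "-m' \<in> eigenvalues S"
  proof -
    obtain v where v: "v \<noteq> 0" "(-S) *v v = m' *\<^sub>R v" using m'(1) unfolding eigenvalues_def by blast
    have "S *v v = - ((-S) *v v)" by (simp only: neg_mv minus_minus)
    also have "\<dots> = (-m') *\<^sub>R v" using v by simp
    finally show ?thesis unfolding eigenvalues_def using v by blast
  qed
  have lo: "(-m') * (norm x)^2 \<le> x \<bullet> (S *v x)" for x
  proof -
    have "x \<bullet> ((-S) *v x) \<le> m' * (norm x)^2" using m'(2) by blast
    then have "- (x \<bullet> (S *v x)) \<le> m' * (norm x)^2" by (simp only: neg_mv inner_minus_right)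
    then show ?thesis by linarith
  qed
  have smin: "sigma_min S = -m'" unfolding sigma_min_def
  proof (rule Min_eqI[OF fin])
    fix l assume l: "l \<in> eigenvalues S"
    obtain v where v: "v \<noteq> 0" "S *v v = l *\<^sub>R v" using l unfolding eigenvalues_def by blast
    have "v \<bullet> (S *v v) = l * (norm v)^2" using v(2) by (simp add: dot_square_norm)
    then have "(-m') * (norm v)^2 \<le> l * (norm v)^2" using lo[of v] by linarith
    moreover have "(norm v)^2 > 0" using v(1) by simp
    ultimately show "-m' \<le> l" by (rule mult_right_le_imp_le)
  next
    show "-m' \<in> eigenvalues S" by (rule mm)
  qed
  show "sigma_min S \<in> eigenvalues S" unfolding smin by (rule mm)
  show "sigma_min S * (norm x)^2 \<le> x \<bullet> (S *v x)" unfolding smin by (rule lo)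
qed




lemma tr_inner: "x \<bullet> (transpose A *v z) = (A *v x) \<bullet> (z::real^'m::finite)" for A :: "real^'n::finite^'m"
proof -
  have "x \<bullet> (transpose A *v z) = x \<bullet> (z v* A)" by (simp only: transpose_matrix_vector)
  also have "\<dots> = (z v* A) \<bullet> x" by (rule inner_commute)
  also have "\<dots> = z \<bullet> (A *v x)" by (rule dot_lmul_matrix)
  also have "\<dots> = (A *v x) \<bullet> z" by (rule inner_commute)
  finally show ?thesis .
qed

locale lqr =
  fixes A :: "real^'n::finite^'n" and B :: "real^'m::finite^'n"
    and Q P :: "real^'n^'n" and R :: "real^'m^'m" and K :: "real^'n^'m" and N :: "real^'m^'m"
  assumes symP: "transpose P = P" and pdP: "\<And>x. x \<noteq> 0 \<Longrightarrow> 0 < x \<bullet> (P *v x)"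
    and symQ: "transpose Q = Q" and pdQ: "\<And>x. x \<noteq> 0 \<Longrightarrow> 0 < x \<bullet> (Q *v x)"
    and symR: "transpose R = R" and pdR: "\<And>x. x \<noteq> 0 \<Longrightarrow> 0 < x \<bullet> (R *v x)"
    and MN: "(R + transpose B ** P ** B) ** N = mat 1"
    and DARE: "P = transpose A ** P ** A + Q - transpose A ** P ** B ** N ** transpose B ** P ** A"
    and Kdef: "K = - (N ** transpose B ** P ** A)"
begin


definition "M = R + transpose B ** P ** B"

lemma psdP: "0 \<le> x \<bullet> (P *v x)" using pdP[of x] by (cases "x = 0") auto
lemma psdQ: "0 \<le> x \<bullet> (Q *v x)" using pdQ[of x] by (cases "x = 0") auto
lemma psdR: "0 \<le> x \<bullet> (R *v x)" using pdR[of x] by (cases "x = 0") auto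

lemma Mv: "M *v u = R *v u + transpose B *v (P *v (B *v u))"
  by (simp add: M_def matrix_vector_mult_add_rdistrib matrix_vector_mul_assoc[symmetric])

lemma symM: "transpose M = M"
  by (simp add: M_def transpose_add' matrix_transpose_mul symP symR transpose_transpose matrix_mul_assoc)

lemma psdM: "0 \<le> z \<bullet> (M *v z)"
proof -
  have "z \<bullet> (M *v z) = z \<bullet> (R *v z) + (B *v z) \<bullet> (P *v (B *v z))"
    unfolding Mv inner_add_right tr_inner ..
  then show ?thesis using psdR[of z] psdP[of "B *v z"] by simp
qed

lemma identity:
  "x \<bullet> (Q *v x) + u \<bullet> (R *v u) + (A *v x + B *v u) \<bullet> (P *v (A *v x + B *v u)) - x \<bullet> (P *v x)
   = (u - K *v x) \<bullet> (M *v (u - K *v x))"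
proof -
  define y where "y = transpose B *v (P *v (A *v x))"
  define w where "w = N *v y"
  have Kx: "K *v x = - w"
    unfolding Kdef w_def y_def neg_mv matrix_vector_mul_assoc[symmetric] ..
  have Mw: "M *v w = y"
    unfolding w_def matrix_vector_mul_assoc M_def MN matrix_vector_mul_lid ..
  have "x \<bullet> (P *v x) = x \<bullet> ((transpose A ** P ** A + Q - transpose A ** P ** B ** N ** transpose B ** P ** A) *v x)"
    by (rule arg_cong[OF DARE, of "\<lambda>Z. x \<bullet> (Z *v x)"])
  also have "\<dots> = (A *v x) \<bullet> (P *v (A *v x)) + x \<bullet> (Q *v x) - (A *v x) \<bullet> (P *v (B *v w))"
    by (simp add: w_def y_def matrix_vector_mult_add_rdistrib matrix_vector_mult_diff_rdistrib
        matrix_vector_mul_assoc[symmetric] inner_add_right inner_diff_right tr_inner del: transpose_matrix_vector)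
  also have "(A *v x) \<bullet> (P *v (B *v w)) = y \<bullet> w"
  proof -
    have "(A *v x) \<bullet> (P *v (B *v w)) = (P *v (A *v x)) \<bullet> (B *v w)" by (rule sym_inner[OF symP, symmetric])
    also have "\<dots> = (B *v w) \<bullet> (P *v (A *v x))" by (rule inner_commute)
    also have "\<dots> = w \<bullet> y" unfolding y_def tr_inner ..
    finally show ?thesis by (simp add: inner_commute)
  qed
  finally have D: "x \<bullet> (P *v x) = (A *v x) \<bullet> (P *v (A *v x)) + x \<bullet> (Q *v x) - y \<bullet> w" .
  have e2: "(B *v u) \<bullet> (P *v (A *v x)) = u \<bullet> y" unfolding y_def tr_inner ..
  have e1: "(A *v x) \<bullet> (P *v (B *v u)) = u \<bullet> y"
  proof -
    have "(A *v x) \<bullet> (P *v (B *v u)) = (P *v (A *v x)) \<bullet> (B *v u)" by (rule sym_inner[OF symP, symmetric])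
    also have "\<dots> = (B *v u) \<bullet> (P *v (A *v x))" by (rule inner_commute)
    finally show ?thesis using e2 by simp
  qed
  have e3: "(B *v u) \<bullet> (P *v (B *v u)) = u \<bullet> (transpose B *v (P *v (B *v u)))"
    unfolding tr_inner ..
  have e4: "w \<bullet> (M *v u) = u \<bullet> y"
  proof -
    have "w \<bullet> (M *v u) = (M *v w) \<bullet> u" by (rule sym_inner[OF symM, symmetric])
    then show ?thesis using Mw by (simp add: inner_commute)
  qed
  have Mu: "u \<bullet> (M *v u) = u \<bullet> (R *v u) + u \<bullet> (transpose B *v (P *v (B *v u)))"
    unfolding Mv inner_add_right ..
  have um: "u - K *v x = u + w" using Kx by simp
  have R1: "(u - K *v x) \<bullet> (M *v (u - K *v x)) = u \<bullet> (M *v u) + u \<bullet> y + (w \<bullet> (M *v u) + w \<bullet> y)"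
    unfolding um matrix_vector_right_distrib inner_add_left inner_add_right Mw by linarith
  have X: "(A *v x + B *v u) \<bullet> (P *v (A *v x + B *v u)) =
     (A *v x) \<bullet> (P *v (A *v x)) + u \<bullet> y + (u \<bullet> y + u \<bullet> (transpose B *v (P *v (B *v u))))"
    unfolding matrix_vector_right_distrib inner_add_left inner_add_right e1 e2 e3 ..
  show ?thesis using X D R1 Mu e4 inner_commute[of w y] by linarith
qed


definition "V x = x \<bullet> (P *v x)"
definition "cost x0 u t = traj A B x0 u t \<bullet> (Q *v traj A B x0 u t) + u t \<bullet> (R *v u t)"

lemma V_nonneg: "0 \<le> V x" unfolding V_def by (rule psdP)
lemma cost_nonneg: "0 \<le> cost x0 u t" unfolding cost_def using psdQ psdR by (simp add: add_nonneg_nonneg)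

lemma telescope:
  "(\<Sum>t<n. cost x0 u t) = V x0 - V (traj A B x0 u n)
     + (\<Sum>t<n. (u t - K *v traj A B x0 u t) \<bullet> (M *v (u t - K *v traj A B x0 u t)))"
proof (induction n)
  case 0 then show ?case by simp
next
  case (Suc n)
  have "cost x0 u n = V (traj A B x0 u n) - V (traj A B x0 u (Suc n))
     + (u n - K *v traj A B x0 u n) \<bullet> (M *v (u n - K *v traj A B x0 u n))"
    using identity[of "traj A B x0 u n" "u n"] unfolding cost_def V_def by simp
  then show ?case using Suc.IH by simp
qed

lemma lower: "V x0 - V (traj A B x0 u n) \<le> (\<Sum>t<n. cost x0 u t)"
  unfolding telescope using psdM by (simp add: sum_nonneg)

definition "qm = sigma_min Q"
definition "pm = sigma_max P"

lemma symQ': "transpose Q = Q" by (rule symQ)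

lemma qm_pos: "qm > 0"
proof -
  obtain v where v: "v \<noteq> 0" "Q *v v = qm *\<^sub>R v"
    using spectral(2)[OF symQ] unfolding qm_def eigenvalues_def by blast
  have "0 < v \<bullet> (Q *v v)" by (rule pdQ[OF v(1)])
  also have "\<dots> = qm * (norm v)^2" using v(2) by (simp add: dot_square_norm)
  finally show ?thesis using v(1) by (simp add: zero_less_mult_iff)
qed

lemma cost_ge: "qm * (norm (traj A B x0 u t))^2 \<le> cost x0 u t"
proof -
  have "qm * (norm (traj A B x0 u t))^2 \<le> traj A B x0 u t \<bullet> (Q *v traj A B x0 u t)"
    unfolding qm_def by (rule spectral(4)[OF symQ])
  then show ?thesis unfolding cost_def using psdR[of "u t"] by linarith
qed

lemma V_le: "V x \<le> \<bar>pm\<bar> * (norm x)^2"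
proof -
  have "V x \<le> pm * (norm x)^2" unfolding V_def pm_def by (rule spectral(3)[OF symP])
  also have "\<dots> \<le> \<bar>pm\<bar> * (norm x)^2" by (simp add: mult_right_mono)
  finally show ?thesis .
qed

lemma summable_ge:
  assumes sm: "summable (cost x0 u)"
  shows "V x0 \<le> suminf (cost x0 u)"
proof -
  have c0: "cost x0 u \<longlonglongrightarrow> 0" by (rule summable_LIMSEQ_zero[OF sm])
  have "(\<lambda>t. (\<bar>pm\<bar> / qm) * cost x0 u t) \<longlonglongrightarrow> (\<bar>pm\<bar> / qm) * 0"
    by (intro tendsto_mult tendsto_const c0)
  then have h: "(\<lambda>t. (\<bar>pm\<bar> / qm) * cost x0 u t) \<longlonglongrightarrow> 0" by simp
  have b: "V (traj A B x0 u t) \<le> (\<bar>pm\<bar> / qm) * cost x0 u t" for t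
  proof -
    have "V (traj A B x0 u t) \<le> \<bar>pm\<bar> * (norm (traj A B x0 u t))^2" by (rule V_le)
    also have "\<dots> \<le> \<bar>pm\<bar> * (cost x0 u t / qm)"
      using cost_ge[of x0 u t] qm_pos by (intro mult_left_mono) (simp_all add: field_simps)
    finally show ?thesis by simp
  qed
  have V0: "(\<lambda>t. V (traj A B x0 u t)) \<longlonglongrightarrow> 0"
    by (rule real_tendsto_sandwich[OF _ _ tendsto_const h]) (use V_nonneg b in auto)
  have "(\<lambda>n. V x0 - V (traj A B x0 u n)) \<longlonglongrightarrow> V x0 - 0"
    by (intro tendsto_diff tendsto_const V0)
  then show ?thesis
    using LIMSEQ_le[OF _ summable_LIMSEQ[OF sm], of "\<lambda>n. V x0 - V (traj A B x0 u n)"] lower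
    by auto
qed

definition "xf x0 = traj (A + B ** K) B x0 (\<lambda>_. 0)"
definition "uf x0 t = K *v xf x0 t"

lemma xf_Suc: "xf x0 (Suc t) = A *v xf x0 t + B *v (K *v xf x0 t)"
  by (simp add: xf_def matrix_vector_mult_add_rdistrib matrix_vector_mul_assoc)

lemma traj_uf: "traj A B x0 (uf x0) t = xf x0 t"
  by (induction t) (simp_all add: xf_Suc uf_def, simp add: xf_def)

lemma fixpoint_unique:
  assumes "\<forall>t. u t = K *v traj A B x0 u t"
  shows "u = uf x0"
proof -
  have tr: "traj A B x0 u t = xf x0 t" for t
  proof (induction t)
    case 0 then show ?case by (simp add: xf_def)
  next
    case (Suc t)
    have ut: "u t = K *v traj A B x0 u t" using assms by blast
    show ?case by (simp only: traj.simps xf_Suc ut Suc.IH)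
  qed
  show ?thesis using assms tr by (auto simp: uf_def)
qed

lemma uf_sum: "(\<Sum>t<n. cost x0 (uf x0) t) = V x0 - V (xf x0 n)"
  unfolding telescope traj_uf by (simp add: uf_def)

lemma uf_V: "V (xf x0 n) \<le> V x0"
  using uf_sum[of x0 n] sum_nonneg[of "{..<n}" "cost x0 (uf x0)"] cost_nonneg by fastforce

lemma uf_summable: "summable (cost x0 (uf x0))"
  by (rule summableI_nonneg_bounded[where x="V x0"]) (use cost_nonneg uf_sum V_nonneg in auto)

lemma uf_suminf: "suminf (cost x0 (uf x0)) = V x0"
proof (rule antisym)
  show "suminf (cost x0 (uf x0)) \<le> V x0"
    by (rule suminf_le_const[OF uf_summable]) (use uf_sum V_nonneg in auto)
  show "V x0 \<le> suminf (cost x0 (uf x0))" by (rule summable_ge[OF uf_summable])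
qed

end



lemma series_val_summable: "summable g \<Longrightarrow> series_val g = ereal (suminf g)"
  unfolding series_val_def
  by (rule lim_imp_Limsup) (simp_all add: summable_LIMSEQ)

lemma series_val_le:
  fixes c :: "nat \<Rightarrow> real"
  assumes c0: "\<And>t. 0 \<le> c t" and H: "summable c \<Longrightarrow> L \<le> suminf c"
  shows "series_val (\<lambda>t. - c t) \<le> ereal (- L)"
proof (cases "summable c")
  case True
  have "summable (\<lambda>t. - c t)" using True by (rule summable_minus)
  then have "series_val (\<lambda>t. - c t) = ereal (suminf (\<lambda>t. - c t))" by (rule series_val_summable)
  also have "suminf (\<lambda>t. - c t) = - suminf c" using True by (rule suminf_minus)
  finally show ?thesis using H[OF True] by simp
next
  case False
  have "\<exists>N0. L < sum c {..<N0}"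
  proof (rule ccontr)
    assume "\<not> ?thesis"
    then have "\<And>n. sum c {..<n} \<le> L" by (simp add: not_less)
    then have "summable c" by (rule summableI_nonneg_bounded[OF c0])
    then show False using False by simp
  qed
  then obtain N0 where N0: "L < sum c {..<N0}" by blast
  have "\<forall>\<^sub>F n in sequentially. ereal (\<Sum>t<n. - c t) \<le> ereal (- L)"
  proof (rule eventually_sequentiallyI[of N0])
    fix n assume "N0 \<le> n"
    then have "sum c {..<N0} \<le> sum c {..<n}" by (intro sum_mono2) (auto intro: c0)
    then show "ereal (\<Sum>t<n. - c t) \<le> ereal (- L)" using N0 by (simp add: sum_negf)
  qed
  then show ?thesis unfolding series_val_def by (rule Limsup_bounded)
qed

lemma sum_pair: "(\<Sum>p\<in>(UNIV::('a::finite \<times> 'b::finite) set). f p) = (\<Sum>j\<in>UNIV. \<Sum>b\<in>UNIV. f (j,b))"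
  by (simp add: sum.cartesian_product UNIV_Times_UNIV[symmetric] del: UNIV_Times_UNIV)

lemma inner_comp: "x \<bullet> z = (\<Sum>i\<in>UNIV. comp x i \<bullet> comp z i)" for x z :: "real^('i::finite \<times> 'k::finite)"
  by (simp add: inner_vec_def comp_def sum_pair)

lemma comp_bd: "comp (blockdiag M *v y) i = M i *v comp y i"
proof -
  have "(blockdiag M *v y) $ (i, k) = (M i *v comp y i) $ k" for k
  proof -
    have "(blockdiag M *v y) $ (i, k) = (\<Sum>j\<in>UNIV. \<Sum>b\<in>UNIV. (if i = j then M i $ k $ b else 0) * y $ (j, b))"
      by (simp add: matrix_vector_mult_def blockdiag_def sum_pair) (intro sum.cong refl, auto)
    also have "\<dots> = (\<Sum>j\<in>UNIV. if i = j then (\<Sum>b\<in>UNIV. M i $ k $ b * y $ (j, b)) else 0)"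
      by (intro sum.cong) auto
    also have "\<dots> = (\<Sum>b\<in>UNIV. M i $ k $ b * y $ (i, b))" by simp
    also have "\<dots> = (M i *v comp y i) $ k" by (simp add: matrix_vector_mult_def comp_def)
    finally show ?thesis .
  qed
  then show ?thesis by (simp add: comp_def vec_eq_iff)
qed

lemma inner_bd: "x \<bullet> (blockdiag M *v y) = (\<Sum>i\<in>UNIV. comp x i \<bullet> (M i *v comp y i))"
  by (simp add: inner_comp[of x] comp_bd)

lemma transpose_bd: "transpose (blockdiag M) = blockdiag (\<lambda>i. transpose (M i))"
  by (auto simp: transpose_def blockdiag_def vec_eq_iff)

lemma comp_add: "comp (a + b) i = comp a i + comp b i"
  by (simp add: comp_def vec_eq_iff)

lemma traj_comp:
  "comp (traj (blockdiag A) (blockdiag B) x0 u t) i = traj (A i) (B i) (comp x0 i) (\<lambda>t. comp (u t) i) t"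
  by (induction t) (simp_all add: comp_add comp_bd)

lemma comp_zero: "(\<forall>i. comp x i = 0) \<Longrightarrow> x = 0"
  by (simp add: comp_def vec_eq_iff)

lemma bd_pd:
  assumes "\<And>i. sym_pos_def (M i)"
  shows "sym_pos_def (blockdiag M)"
  unfolding sym_pos_def_def
proof (intro conjI allI impI)
  show "transpose (blockdiag M) = blockdiag M"
    unfolding transpose_bd using assms by (simp add: sym_pos_def_def)
  fix x assume x: "x \<noteq> (0::real^('a \<times> 'b))"
  then obtain i where i: "comp x i \<noteq> 0" using comp_zero by blast
  have nn: "0 \<le> comp x j \<bullet> (M j *v comp x j)" for j
    using assms[of j] unfolding sym_pos_def_def by (cases "comp x j = 0") auto
  have "0 < comp x i \<bullet> (M i *v comp x i)" using assms[of i] i unfolding sym_pos_def_def by blast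
  also have "\<dots> \<le> (\<Sum>j\<in>UNIV. comp x j \<bullet> (M j *v comp x j))"
    by (rule member_le_sum) (use nn in auto)
  finally show "0 < x \<bullet> (blockdiag M *v x)" unfolding inner_bd .
qed




lemma spd_psd: "sym_pos_def S \<Longrightarrow> 0 \<le> x \<bullet> (S *v x)"
  unfolding sym_pos_def_def by (cases "x = 0") auto

lemma spd_eig_pos:
  assumes "sym_pos_def S" "l \<in> eigenvalues S"
  shows "l > 0"
proof -
  obtain v where v: "v \<noteq> 0" "S *v v = l *\<^sub>R v" using assms(2) unfolding eigenvalues_def by blast
  have "0 < v \<bullet> (S *v v)" using assms(1) v(1) unfolding sym_pos_def_def by blast
  also have "\<dots> = l * (norm v)^2" using v(2) by (simp add: dot_square_norm)
  finally show ?thesis using v(1) by (simp add: zero_less_mult_iff)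
qed

theorem theorem9:
  fixes Ai :: "'i::finite \<Rightarrow> real^'d::finite^'d"
    and Bi :: "'i \<Rightarrow> real^'c::finite^'d"
    and Qi :: "'i \<Rightarrow> real^'d^'d"
    and Ri :: "'i \<Rightarrow> real^'c^'c"
    and Hi :: "'i \<Rightarrow> real^'c^'c"
    and a :: "'i \<Rightarrow> nat \<Rightarrow> real"
    and C :: real
    and P :: "real^('i \<times> 'd)^('i \<times> 'd)"
    and K :: "real^('i \<times> 'd)^('i \<times> 'c)"
    and x0 :: "real^('i \<times> 'd)"
  assumes Q_pd: "\<And>i. sym_pos_def (Qi i)"
    and R_pd: "\<And>i. sym_pos_def (Ri i)"
    and H_pd: "\<And>i. sym_pos_def (Hi i)"
    and ctrb: "controllable (blockdiag Ai) (blockdiag Bi)"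
    and C_pos: "C > 0"
    and C_lb: "\<And>t. (\<Sum>i\<in>UNIV. a i t) \<ge> C"
    and P_pd: "sym_pos_def P"
    and DARE: "P = transpose (blockdiag Ai) ** P ** blockdiag Ai + blockdiag Qi
                 - transpose (blockdiag Ai) ** P ** blockdiag Bi
                   ** matrix_inv (transpose (blockdiag Bi) ** P ** blockdiag Bi + blockdiag Ri)
                   ** transpose (blockdiag Bi) ** P ** blockdiag Ai"
    and K_def: "K = - (matrix_inv (blockdiag Ri + transpose (blockdiag Bi) ** P ** blockdiag Bi)
                   ** transpose (blockdiag Bi) ** P ** blockdiag Ai)"
    and KHK: "transpose K ** blockdiag Hi ** K \<noteq> 0"
    and x0_X0: "(norm x0)\<^sup>2 \<le> C * sigma_min P
                  / (sigma_max P * sigma_max (transpose K ** blockdiag Hi ** K))"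
  shows "swm_feasible Ai Bi Qi Ri Hi a x0
         \<and> (\<forall>u. (\<forall>t. u t = K *v traj (blockdiag Ai) (blockdiag Bi) x0 u t)
               \<longrightarrow> swm_optimal_input Ai Bi Qi Ri Hi a x0 u)
         \<and> (\<exists>U E. competitive_equilibrium Ai Bi Qi Ri Hi a x0 (\<lambda>t. 0) U E
               \<and> (\<forall>u. (\<forall>t. u t = K *v traj (blockdiag Ai) (blockdiag Bi) x0 u t)
                     \<longrightarrow> (\<forall>i t. U i t = comp (u t) i)))"
proof -
  let ?A = "blockdiag Ai" and ?B = "blockdiag Bi" and ?Q = "blockdiag Qi"
    and ?R = "blockdiag Ri" and ?H = "blockdiag Hi"
  have Qpd: "sym_pos_def ?Q" by (rule bd_pd[OF Q_pd])
  have Rpd: "sym_pos_def ?R" by (rule bd_pd[OF R_pd])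
  have Hpd: "sym_pos_def ?H" by (rule bd_pd[OF H_pd])
  define MM where "MM = ?R + transpose ?B ** P ** ?B"
  define N where "N = matrix_inv MM"
  have pdMM: "0 < x \<bullet> (MM *v x)" if "x \<noteq> 0" for x
  proof -
    have "x \<bullet> (MM *v x) = x \<bullet> (?R *v x) + (?B *v x) \<bullet> (P *v (?B *v x))"
      unfolding MM_def matrix_vector_mult_add_rdistrib matrix_vector_mul_assoc[symmetric]
        inner_add_right tr_inner ..
    moreover have "0 < x \<bullet> (?R *v x)" using Rpd that unfolding sym_pos_def_def by blast
    moreover have "0 \<le> (?B *v x) \<bullet> (P *v (?B *v x))" by (rule spd_psd[OF P_pd])
    ultimately show ?thesis by linarith
  qed
  have "\<exists>B'. B' ** MM = mat 1"
    unfolding matrix_left_invertible_ker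
  proof (intro allI impI)
    fix x assume "MM *v x = 0"
    then show "x = 0" using pdMM[of x] by (cases "x = 0") auto
  qed
  then have "invertible MM" by (simp add: invertible_left_inverse)
  then have "MM ** N = mat 1 \<and> N ** MM = mat 1"
    unfolding N_def matrix_inv_def invertible_def by (rule someI_ex)
  then have MN: "MM ** N = mat 1" by blast
  have Kd: "K = - (N ** transpose ?B ** P ** ?A)" unfolding K_def N_def MM_def ..
  have Dd: "P = transpose ?A ** P ** ?A + ?Q - transpose ?A ** P ** ?B ** N ** transpose ?B ** P ** ?A"
    using DARE unfolding N_def MM_def by (simp only: add.commute)
  have symP: "transpose P = P" using P_pd unfolding sym_pos_def_def by blast
  have "lqr ?A ?B ?Q P ?R K N"
    unfolding lqr_def
    using symP P_pd Qpd Rpd MN Kd Dd unfolding sym_pos_def_def MM_def by blast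
  then interpret L: lqr ?A ?B ?Q P ?R K N .

  have stage: "swm_stage Ai Bi Qi Ri x0 u = (\<lambda>t. - L.cost x0 u t)" for u
  proof
    fix t
    show "swm_stage Ai Bi Qi Ri x0 u t = - L.cost x0 u t"
      unfolding swm_stage_def util_def L.cost_def inner_bd
      by (simp add: sum_negf sum_subtractf sum.distrib)
  qed
  have consum: "(\<Sum>i\<in>UNIV. cons (Hi i) (comp (v::real^('i \<times> 'c)) i)) = v \<bullet> (?H *v v)" for v
    unfolding cons_def inner_bd ..
  define uf where "uf = L.uf x0"
  define xf where "xf = L.xf x0"
  define S where "S = transpose K ** ?H ** K"
  have symH: "transpose ?H = ?H" using Hpd unfolding sym_pos_def_def by blast
  have symS: "transpose S = S"
    unfolding S_def by (simp add: matrix_transpose_mul symH matrix_mul_assoc)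
  have hS: "uf t \<bullet> (?H *v uf t) = xf t \<bullet> (S *v xf t)" for t
    unfolding uf_def L.uf_def xf_def S_def matrix_vector_mul_assoc[symmetric] tr_inner ..
  have pmin: "sigma_min P > 0" by (rule spd_eig_pos[OF P_pd spectral(2)[OF symP]])
  have pmax: "sigma_max P > 0" by (rule spd_eig_pos[OF P_pd spectral(1)[OF symP]])
  have feas: "uf t \<bullet> (?H *v uf t) \<le> C" for t
  proof -
    define s where "s = sigma_max S"
    define x where "x = xf t"
    have 1: "uf t \<bullet> (?H *v uf t) \<le> s * (norm x)^2"
      unfolding hS s_def x_def by (rule spectral(3)[OF symS])
    show ?thesis
    proof (cases "s \<le> 0")
      case True
      then have "s * (norm x)^2 \<le> 0" by (simp add: mult_nonpos_nonneg)
      then show ?thesis using 1 C_pos by linarith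
    next
      case False
      then have s0: "s > 0" by simp
      have a: "sigma_min P * (norm x)^2 \<le> L.V x"
        unfolding L.V_def by (rule spectral(4)[OF symP])
      have b: "L.V x \<le> L.V x0" unfolding x_def xf_def by (rule L.uf_V)
      have c: "L.V x0 \<le> sigma_max P * (norm x0)^2"
        unfolding L.V_def by (rule spectral(3)[OF symP])
      have d: "(norm x0)^2 \<le> C * sigma_min P / (sigma_max P * s)"
        using x0_X0 unfolding S_def s_def .
      have "sigma_max P * (norm x0)^2 \<le> sigma_max P * (C * sigma_min P / (sigma_max P * s))"
        using d pmax by (intro mult_left_mono) auto
      also have "\<dots> = C * sigma_min P / s" using pmax by (simp add: field_simps)
      finally have "sigma_min P * (norm x)^2 \<le> C * sigma_min P / s" using a b c by linarith
      also have "\<dots> = sigma_min P * (C / s)" by simp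
      finally have "(norm x)^2 \<le> C / s" using pmin by (rule mult_left_le_imp_le)
      then have "s * (norm x)^2 \<le> s * (C / s)" using s0 by (intro mult_left_mono) auto
      also have "\<dots> = C" using s0 by simp
      finally show ?thesis using 1 by linarith
    qed
  qed
  define Sa where "Sa t = (\<Sum>j\<in>UNIV. a j t - cons (Hi j) (comp (uf t) j))" for t
  define E where "E i t = a i t - cons (Hi i) (comp (uf t) i) - Sa t / real CARD('i)" for i t
  have Sa_nn: "0 \<le> Sa t" for t
  proof -
    have "Sa t = (\<Sum>j\<in>UNIV. a j t) - uf t \<bullet> (?H *v uf t)"
      unfolding Sa_def sum_subtractf consum ..
    then show ?thesis using C_lb[of t] feas[of t] by linarith
  qed
  have E_le: "E i t \<le> a i t - cons (Hi i) (comp (uf t) i)" for i t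
    unfolding E_def using Sa_nn[of t] by simp
  have E_sum: "(\<Sum>i\<in>UNIV. E i t) = 0" for t
  proof -
    have "(\<Sum>i\<in>UNIV. E i t) = Sa t - real CARD('i) * (Sa t / real CARD('i))"
      unfolding E_def Sa_def sum_subtractf by simp
    also have "\<dots> = 0" by simp
    finally show ?thesis .
  qed
  have adm: "swm_admissible Hi a uf E"
    unfolding swm_admissible_def using E_le E_sum by blast
  have sm: "summable (swm_stage Ai Bi Qi Ri x0 uf)"
    unfolding stage uf_def by (rule summable_minus[OF L.uf_summable])
  have sinf: "suminf (swm_stage Ai Bi Qi Ri x0 uf) = - L.V x0"
    unfolding stage uf_def using suminf_minus[OF L.uf_summable] L.uf_suminf by simp
  have upper: "series_val (swm_stage Ai Bi Qi Ri x0 u') \<le> ereal (- L.V x0)" for u'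
    unfolding stage by (rule series_val_le[OF L.cost_nonneg L.summable_ge])
  have opt: "swm_optimal_input Ai Bi Qi Ri Hi a x0 uf"
    unfolding swm_optimal_input_def using adm sm upper sinf by auto
  have fixp: "u = uf" if "\<forall>t. u t = K *v traj ?A ?B x0 u t" for u
    unfolding uf_def by (rule L.fixpoint_unique[OF that])
  have val: "swm_value Ai Bi Qi Ri Hi a x0 = ereal (- L.V x0)"
  proof (rule antisym)
    show "swm_value Ai Bi Qi Ri Hi a x0 \<le> ereal (- L.V x0)"
      unfolding swm_value_def by (rule SUP_least) (use upper in auto)
    have "series_val (swm_stage Ai Bi Qi Ri x0 uf) = ereal (- L.V x0)"
      using series_val_summable[OF sm] sinf by simp
    moreover have "(uf, E) \<in> {(u,e). swm_admissible Hi a u e}" using adm by simp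
    ultimately show "ereal (- L.V x0) \<le> swm_value Ai Bi Qi Ri Hi a x0"
      unfolding swm_value_def by (metis (no_types, lifting) SUP_upper fst_conv)
  qed
  have feasible: "swm_feasible Ai Bi Qi Ri Hi a x0"
    unfolding swm_feasible_def val using adm by auto

  define U where "U i t = comp (uf t) i" for i t
  define ac where "ac i w t = traj (Ai i) (Bi i) (comp x0 i) w t \<bullet> (Qi i *v traj (Ai i) (Bi i) (comp x0 i) w t)
      + w t \<bullet> (Ri i *v w t)" for i w t
  have cost_split: "L.cost x0 u t = (\<Sum>i\<in>UNIV. ac i (\<lambda>t. comp (u t) i) t)" for u t
    unfolding L.cost_def inner_bd traj_comp ac_def sum.distrib ..
  have ac_nn: "0 \<le> ac i w t" for i w t
    unfolding ac_def using spd_psd[OF Q_pd] spd_psd[OF R_pd] by (simp add: add_nonneg_nonneg)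
  have astage: "agent_stage (Ai i) (Bi i) (Qi i) (Ri i) (comp x0 i) (\<lambda>t. 0) w e = (\<lambda>t. - ac i w t)" for i w e
    unfolding agent_stage_def util_def ac_def by (rule ext) simp
  have Ufun: "(\<lambda>t. comp (uf t) i) = U i" for i unfolding U_def ..
  have ac_le: "ac i (U i) t \<le> L.cost x0 uf t" for i t
    unfolding cost_split Ufun by (rule member_le_sum) (use ac_nn in auto)
  have costuf: "summable (L.cost x0 uf)" unfolding uf_def by (rule L.uf_summable)
  have acs: "summable (ac i (U i))" for i
    by (rule summable_comparison_test[OF _ costuf]) (use ac_nn ac_le in auto)
  have better: "suminf (ac i (U i)) \<le> suminf (ac i w)" if smw: "summable (ac i w)" for i w
  proof -
    define u' where "u' t = (\<chi> p. if fst p = i then w t $ snd p else uf t $ p)" for t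
    have cu: "(\<lambda>t. comp (u' t) j) = (if j = i then w else U j)" for j
      by (auto simp: u'_def U_def comp_def vec_eq_iff)
    have cst: "L.cost x0 u' t = L.cost x0 uf t + (ac i w t - ac i (U i) t)" for t
    proof -
      have "L.cost x0 u' t = (\<Sum>j\<in>UNIV. ac j (U j) t + (if j = i then ac i w t - ac i (U i) t else 0))"
        unfolding cost_split cu by (intro sum.cong) auto
      also have "\<dots> = L.cost x0 uf t + (ac i w t - ac i (U i) t)"
        unfolding sum.distrib cost_split Ufun by simp
      finally show ?thesis .
    qed
    have s2: "summable (\<lambda>t. ac i w t - ac i (U i) t)" by (rule summable_diff[OF smw acs])
    have s3: "summable (L.cost x0 u')" unfolding cst by (rule summable_add[OF costuf s2])
    have "L.V x0 \<le> suminf (L.cost x0 u')" by (rule L.summable_ge[OF s3])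
    also have "\<dots> = suminf (L.cost x0 uf) + (suminf (ac i w) - suminf (ac i (U i)))"
      unfolding cst suminf_add[OF costuf s2, symmetric] suminf_diff[OF smw acs] ..
    also have "suminf (L.cost x0 uf) = L.V x0" unfolding uf_def by (rule L.uf_suminf)
    finally show ?thesis by simp
  qed
  have aopt: "agent_optimal (Ai i) (Bi i) (Qi i) (Ri i) (Hi i) (a i) (comp x0 i) (\<lambda>t. 0) (U i) (E i)" for i
    unfolding agent_optimal_def
  proof (intro conjI allI impI)
    show "agent_feasible (Hi i) (a i) (U i) (E i)"
      unfolding agent_feasible_def U_def using E_le by blast
    show "summable (agent_stage (Ai i) (Bi i) (Qi i) (Ri i) (comp x0 i) (\<lambda>t. 0) (U i) (E i))"
      unfolding astage by (rule summable_minus[OF acs])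
    fix w e
    have "series_val (\<lambda>t. - ac i w t) \<le> ereal (- suminf (ac i (U i)))"
      by (rule series_val_le[OF ac_nn better])
    moreover have "suminf (\<lambda>t. - ac i (U i) t) = - suminf (ac i (U i))" by (rule suminf_minus[OF acs])
    ultimately show "series_val (agent_stage (Ai i) (Bi i) (Qi i) (Ri i) (comp x0 i) (\<lambda>t. 0) w e)
       \<le> ereal (suminf (agent_stage (Ai i) (Bi i) (Qi i) (Ri i) (comp x0 i) (\<lambda>t. 0) (U i) (E i)))"
      unfolding astage by simp
  qed
  have ce: "competitive_equilibrium Ai Bi Qi Ri Hi a x0 (\<lambda>t. 0) U E"
    unfolding competitive_equilibrium_def using aopt E_sum by blast
  show ?thesis
  proof (intro conjI allI impI exI[of _ U] exI[of _ E])
    show "swm_feasible Ai Bi Qi Ri Hi a x0" by (rule feasible)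
    show "swm_optimal_input Ai Bi Qi Ri Hi a x0 u" if "\<forall>t. u t = K *v traj ?A ?B x0 u t" for u
      using opt fixp[OF that] by simp
    show "competitive_equilibrium Ai Bi Qi Ri Hi a x0 (\<lambda>t. 0) U E" by (rule ce)
    show "U i t = comp (u t) i" if "\<forall>t. u t = K *v traj ?A ?B x0 u t" for u i t
      using fixp[OF that] by (simp add: U_def)
  qed
qed


end
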